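(* Let $n\ge 3$, $m\ge 1$, and let $f=x_0^{a_0}x_1^{a_1}\cdots x_{n+1}^{a_{n+1}}$ be a monomial. Define $g=x_0^{b_0}x_1^{b_1}\cdots x_{n+1}^{b_{n+1}}$ with $b_0=a_0$, $b_{n+1}=a_{n+1}$ and $b_i=\max\{a_i-1,0\}$ for $i=1,\dots,n$. If $f\in I_{B_n}^{(m)}$, then $g\in I_{B_n}^{(m-(n-2))}$. Moreover $\deg(g)\ge\deg(f)-n$, with equality if $a_i\ne 0$ for all $i=1,\dots,n$.
   Context: Let $k$ be a field. $Q_n$ is the cycle graph on vertices $1,\dots,n$ (edges $\{i,i+1\}$ for $1\le i\le n-1$ and $\{n,1\}$). $B_n$ is the simplicial complex on $\{0,\dots,n+1\}$ with facets $\{0,i,j\}$ and $\{n+1,i,j\}$ for each edge $\{i,j\}$ of $Q_n$, and $I_{B_n}\subset R=k[x_0,\dots,x_{n+1}]$ is its Stanley-Reisner ideal, generated by $\prod_{i\in\tau}x_i$ over non-faces $\tau$ of $B_n$. For a homogeneous ideal $I$, $I^{(m)}=R\cap\bigcap_{P\in\mathrm{Ass}(I)}I^mR_P$ for $m\ge1$, and by convention $I^{(j)}=R$ for $j\le 0$. *)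

theory Defs
  imports Main "HOL-Library.Poly_Mapping"
begin

text \<open>Polynomials over a field 'k in variables x_i (i :: nat), represented as finitely
supported maps from exponent vectors exponent vectors to coefficients.\<close>

type_synonym 'k mpoly = "(nat \<Rightarrow>\<^sub>0 nat) \<Rightarrow>\<^sub>0 'k"

definition polyring :: "nat \<Rightarrow> ('k::field) mpoly set" where
  "polyring N = {p::'k mpoly. \<forall>e\<in>Poly_Mapping.keys p. Poly_Mapping.keys e \<subseteq> {0..N}}"

definition monom :: "(nat \<Rightarrow>\<^sub>0 nat) \<Rightarrow> ('k::field) mpoly" where
  "monom e = Poly_Mapping.single e 1"

definition sqfree_exp :: "nat set \<Rightarrow> nat \<Rightarrow>\<^sub>0 nat" where
  "sqfree_exp T = (\<Sum>i\<in>T. Poly_Mapping.single i 1)"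

definition mdeg :: "(nat \<Rightarrow>\<^sub>0 nat) \<Rightarrow> nat" where
  "mdeg e = (\<Sum>i\<in>Poly_Mapping.keys e. Poly_Mapping.lookup e i)"

definition is_ideal_in :: "'a::comm_ring_1 set \<Rightarrow> 'a set \<Rightarrow> bool" where
  "is_ideal_in Rc J \<longleftrightarrow> J \<subseteq> Rc \<and> 0 \<in> J \<and> (\<forall>x\<in>J. \<forall>y\<in>J. x + y \<in> J) \<and>
      (\<forall>x\<in>J. - x \<in> J) \<and> (\<forall>r\<in>Rc. \<forall>x\<in>J. r * x \<in> J)"

definition ideal_gen :: "'a::comm_ring_1 set \<Rightarrow> 'a set \<Rightarrow> 'a set" where
  "ideal_gen Rc S = \<Inter>{J. is_ideal_in Rc J \<and> S \<subseteq> J}"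

definition ideal_prod :: "'a::comm_ring_1 set \<Rightarrow> 'a set \<Rightarrow> 'a set \<Rightarrow> 'a set" where
  "ideal_prod Rc I J = ideal_gen Rc {a * b | a b. a \<in> I \<and> b \<in> J}"

primrec ideal_pow :: "'a::comm_ring_1 set \<Rightarrow> 'a set \<Rightarrow> nat \<Rightarrow> 'a set" where
  "ideal_pow Rc I 0 = Rc"
| "ideal_pow Rc I (Suc m) = ideal_prod Rc I (ideal_pow Rc I m)"

definition is_prime_in :: "'a::comm_ring_1 set \<Rightarrow> 'a set \<Rightarrow> bool" where
  "is_prime_in Rc P \<longleftrightarrow> is_ideal_in Rc P \<and> P \<noteq> Rc \<and>
      (\<forall>a\<in>Rc. \<forall>b\<in>Rc. a * b \<in> P \<longrightarrow> a \<in> P \<or> b \<in> P)"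

definition Ass :: "'a::comm_ring_1 set \<Rightarrow> 'a set \<Rightarrow> 'a set set" where
  "Ass Rc I = {P. is_prime_in Rc P \<and> (\<exists>r\<in>Rc. P = {x\<in>Rc. x * r \<in> I})}"

text \<open>Symbolic power: R \<inter> \<Inter>_{P \<in> Ass I} I^m R_P for m \<ge> 1 (in a domain,
 f \<in> R lies in I^m R_P iff s f \<in> I^m for some s \<in> R - P); R for m \<le> 0.\<close>
definition symb_pow :: "'a::comm_ring_1 set \<Rightarrow> 'a set \<Rightarrow> int \<Rightarrow> 'a set" where
  "symb_pow Rc I m = (if m \<le> 0 then Rc else
     {f\<in>Rc. \<forall>P\<in>Ass Rc I. \<exists>s\<in>Rc - P. s * f \<in> ideal_pow Rc I (nat m)})"

definition cycle_edge :: "nat \<Rightarrow> nat \<Rightarrow> nat \<Rightarrow> bool" where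
  "cycle_edge n i j \<longleftrightarrow> (1 \<le> i \<and> i < n \<and> j = i + 1) \<or> (1 \<le> j \<and> j < n \<and> i = j + 1)
      \<or> (i = n \<and> j = 1) \<or> (i = 1 \<and> j = n)"

definition B_facets :: "nat \<Rightarrow> nat set set" where
  "B_facets n = {{0, i, j} | i j. cycle_edge n i j} \<union> {{n+1, i, j} | i j. cycle_edge n i j}"

definition B_face :: "nat \<Rightarrow> nat set \<Rightarrow> bool" where
  "B_face n \<tau> \<longleftrightarrow> (\<exists>F\<in>B_facets n. \<tau> \<subseteq> F)"

definition I_B :: "nat \<Rightarrow> ('k::field) mpoly set" where
  "I_B n = ideal_gen (polyring (n+1))
      {monom (sqfree_exp \<tau>) | \<tau>. \<tau> \<subseteq> {0..n+1} \<and> \<not> B_face n \<tau>}"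

end

theory Submission
  imports Defs
begin

section \<open>Generic ideal facts\<close>

lemma ideal_inter:
  assumes "is_ideal_in Rc Rc" "S \<subseteq> Rc"
  shows "is_ideal_in Rc (ideal_gen Rc S)" "S \<subseteq> ideal_gen Rc S" "ideal_gen Rc S \<subseteq> Rc"
proof -
  have ne: "Rc \<in> {J. is_ideal_in Rc J \<and> S \<subseteq> J}" using assms by auto
  show "ideal_gen Rc S \<subseteq> Rc" unfolding ideal_gen_def using ne by blast
  show "S \<subseteq> ideal_gen Rc S" unfolding ideal_gen_def by blast
  show "is_ideal_in Rc (ideal_gen Rc S)"
    unfolding is_ideal_in_def
  proof (intro conjI ballI)
    show "ideal_gen Rc S \<subseteq> Rc" unfolding ideal_gen_def using ne by blast
    show "0 \<in> ideal_gen Rc S" unfolding ideal_gen_def is_ideal_in_def by blast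
    fix x y assume x: "x \<in> ideal_gen Rc S"
    { assume "y \<in> ideal_gen Rc S"
      then show "x + y \<in> ideal_gen Rc S" using x unfolding ideal_gen_def is_ideal_in_def by blast }
    show "- x \<in> ideal_gen Rc S" using x unfolding ideal_gen_def is_ideal_in_def by blast
  next
    fix r x assume "r \<in> Rc" "x \<in> ideal_gen Rc S"
    then show "r * x \<in> ideal_gen Rc S" unfolding ideal_gen_def is_ideal_in_def by blast
  qed
qed

lemma ideal_gen_least:
  "is_ideal_in Rc J \<Longrightarrow> S \<subseteq> J \<Longrightarrow> ideal_gen Rc S \<subseteq> J"
  unfolding ideal_gen_def by blast

lemma ideal_multL: "is_ideal_in Rc J \<Longrightarrow> r \<in> Rc \<Longrightarrow> x \<in> J \<Longrightarrow> r * x \<in> J"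
  unfolding is_ideal_in_def by blast

lemma ideal_multR: "is_ideal_in Rc J \<Longrightarrow> r \<in> Rc \<Longrightarrow> x \<in> J \<Longrightarrow> (x::'a::comm_ring_1) * r \<in> J"
  unfolding is_ideal_in_def by (metis mult.commute)

lemma ideal_add: "is_ideal_in Rc J \<Longrightarrow> x \<in> J \<Longrightarrow> y \<in> J \<Longrightarrow> x + y \<in> J"
  unfolding is_ideal_in_def by blast

lemma ideal_diff: "is_ideal_in Rc J \<Longrightarrow> x \<in> J \<Longrightarrow> y \<in> J \<Longrightarrow> (x::'a::comm_ring_1) - y \<in> J"
  unfolding is_ideal_in_def by (metis diff_conv_add_uminus)

lemma ideal_sub: "is_ideal_in Rc J \<Longrightarrow> J \<subseteq> Rc"
  unfolding is_ideal_in_def by blast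

lemma ideal_zero: "is_ideal_in Rc J \<Longrightarrow> 0 \<in> J"
  unfolding is_ideal_in_def by blast

lemma ideal_sum:
  assumes "is_ideal_in Rc J" "finite A" "\<And>x. x \<in> A \<Longrightarrow> f x \<in> J"
  shows "sum f A \<in> J"
  using assms(2,3)
proof (induction A rule: finite_induct)
  case empty then show ?case using ideal_zero[OF assms(1)] by simp
next
  case (insert x F) then show ?case using ideal_add[OF assms(1)] by simp
qed

lemma ideal_pow_props:
  assumes "is_ideal_in Rc Rc" "is_ideal_in Rc I"
  shows "is_ideal_in Rc (ideal_pow Rc I k) \<and> ideal_pow Rc I k \<subseteq> Rc"
proof (induction k)
  case 0 then show ?case using assms by simp
next
  case (Suc k)
  have "{a * b | a b. a \<in> I \<and> b \<in> ideal_pow Rc I k} \<subseteq> Rc"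
    using Suc ideal_sub[OF assms(2)] ideal_multL[OF assms(1)] by blast
  then show ?case using ideal_inter[OF assms(1)] by (simp add: ideal_prod_def)
qed

lemma ideal_pow_mult:
  assumes "is_ideal_in Rc Rc" "is_ideal_in Rc I" "x \<in> I" "y \<in> ideal_pow Rc I k"
  shows "x * y \<in> ideal_pow Rc I (Suc k)"
proof -
  have "{a * b | a b. a \<in> I \<and> b \<in> ideal_pow Rc I k} \<subseteq> Rc"
    using ideal_pow_props[OF assms(1,2)] ideal_sub[OF assms(2)] ideal_multL[OF assms(1)] by blast
  then have "{a * b | a b. a \<in> I \<and> b \<in> ideal_pow Rc I k} \<subseteq> ideal_prod Rc I (ideal_pow Rc I k)"
    using ideal_inter(2)[OF assms(1)] unfolding ideal_prod_def by blast
  then show ?thesis using assms(3,4) by auto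
qed

lemma ideal_pow_sub:
  assumes "is_ideal_in Rc Rc" "is_ideal_in Rc I"
    "\<And>k. is_ideal_in Rc (D k)" "D 0 = Rc" "I \<subseteq> D 1"
    "\<And>j x y. x \<in> D 1 \<Longrightarrow> y \<in> D j \<Longrightarrow> x * y \<in> D (Suc j)"
  shows "ideal_pow Rc I k \<subseteq> D k"
proof (induction k)
  case 0 then show ?case using assms by simp
next
  case (Suc k)
  show ?case unfolding ideal_pow.simps ideal_prod_def
    by (rule ideal_gen_least[OF assms(3)]) (use Suc assms(5,6) in blast)
qed

lemma prime_prod_notin:
  assumes "is_prime_in Rc P" "is_ideal_in Rc Rc" "1 \<in> Rc" "finite S"
    "\<And>F. F \<in> S \<Longrightarrow> y F \<in> Rc - P"
  shows "prod y S \<in> Rc - P"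
  using assms(4,5)
proof (induction S rule: finite_induct)
  case empty
  have "1 \<notin> P"
  proof
    assume "1 \<in> P"
    then have "\<forall>r\<in>Rc. r * 1 \<in> P" using assms(1) unfolding is_prime_in_def is_ideal_in_def by blast
    then have "Rc \<subseteq> P" by (metis mult_1_right subsetI)
    moreover have "P \<subseteq> Rc" using assms(1) unfolding is_prime_in_def is_ideal_in_def by blast
    ultimately show False using assms(1) unfolding is_prime_in_def by blast
  qed
  then show ?case using assms(3) by simp
next
  case (insert x F)
  then have a: "y x \<in> Rc - P" "prod y F \<in> Rc - P" by auto
  then have "y x * prod y F \<in> Rc" using ideal_multL[OF assms(2)] by blast
  moreover have "y x * prod y F \<notin> P" using a assms(1) unfolding is_prime_in_def by blast
  ultimately show ?case using insert by simp
qed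


lemma keys_uminus_pm: "Poly_Mapping.keys (- (p::'k::field mpoly)) = Poly_Mapping.keys p"
  by (auto simp: in_keys_iff)

lemma keys_add_nat: "Poly_Mapping.keys ((e::nat \<Rightarrow>\<^sub>0 nat) + f) = Poly_Mapping.keys e \<union> Poly_Mapping.keys f"
  by (auto simp: in_keys_iff lookup_add)

lemma polyring_iff: "p \<in> polyring N \<longleftrightarrow> (\<forall>e\<in>Poly_Mapping.keys p. Poly_Mapping.keys e \<subseteq> {0..N})"
  by (simp add: polyring_def)

lemma polyring_ideal: "is_ideal_in (polyring N) (polyring N :: 'k::field mpoly set)"
  unfolding is_ideal_in_def
proof (intro conjI ballI)
  show "polyring N \<subseteq> polyring N" by simp
  show "(0::'k mpoly) \<in> polyring N" by (simp add: polyring_iff)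
  fix x y :: "'k mpoly" assume x: "x \<in> polyring N"
  { assume "y \<in> polyring N" then show "x + y \<in> polyring N"
      using x keys_add[of x y] unfolding polyring_iff by blast }
  show "- x \<in> polyring N" using x by (simp add: polyring_iff keys_uminus_pm)
next
  fix r x :: "'k mpoly" assume "r \<in> polyring N" "x \<in> polyring N"
  then show "r * x \<in> polyring N"
    unfolding polyring_iff
  proof (intro ballI)
    fix e assume "e \<in> Poly_Mapping.keys (r * x)"
    then obtain a b where "e = a + b" "a \<in> Poly_Mapping.keys r" "b \<in> Poly_Mapping.keys x"
      using keys_mult[of r x] by blast
    then show "Poly_Mapping.keys e \<subseteq> {0..N}" using \<open>r \<in> polyring N\<close> \<open>x \<in> polyring N\<close>
      by (auto simp: keys_add_nat polyring_iff)
  qed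
qed

lemma polyring_mult: "r \<in> polyring N \<Longrightarrow> x \<in> polyring N \<Longrightarrow> (r::'k::field mpoly) * x \<in> polyring N"
  using ideal_multL[OF polyring_ideal] by blast

lemma polyring_single: "Poly_Mapping.keys e \<subseteq> {0..N} \<Longrightarrow> (Poly_Mapping.single e c :: 'k::field mpoly) \<in> polyring N"
  by (simp add: polyring_iff)

lemma polyring_one: "(1::'k::field mpoly) \<in> polyring N"
  by (simp add: polyring_iff)

lemma polyring_prod: "finite S \<Longrightarrow> (\<And>x. x \<in> S \<Longrightarrow> f x \<in> polyring N) \<Longrightarrow> (prod f S :: 'k::field mpoly) \<in> polyring N"
  by (induction S rule: finite_induct) (auto simp: polyring_one polyring_mult)

definition cdeg :: "nat set \<Rightarrow> (nat \<Rightarrow>\<^sub>0 nat) \<Rightarrow> nat" where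
  "cdeg C e = (\<Sum>i\<in>C. Poly_Mapping.lookup e i)"

lemma cdeg_add: "cdeg C (e + f) = cdeg C e + cdeg C f"
  by (simp add: cdeg_def lookup_add sum.distrib)

definition Dk :: "nat \<Rightarrow> nat set \<Rightarrow> nat \<Rightarrow> 'k::field mpoly set" where
  "Dk N C k = {p \<in> polyring N. \<forall>e\<in>Poly_Mapping.keys p. cdeg C e \<ge> k}"

lemma Dk_ideal: "is_ideal_in (polyring N) (Dk N C k :: 'k::field mpoly set)"
  unfolding is_ideal_in_def
proof (intro conjI ballI)
  show "Dk N C k \<subseteq> polyring N" by (auto simp: Dk_def)
  show "(0::'k mpoly) \<in> Dk N C k" by (simp add: Dk_def polyring_iff)
  fix x y :: "'k mpoly" assume x: "x \<in> Dk N C k"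
  { assume "y \<in> Dk N C k" then show "x + y \<in> Dk N C k"
      using x keys_add[of x y] ideal_add[OF polyring_ideal] unfolding Dk_def by blast }
  show "- x \<in> Dk N C k" using x
    by (simp add: Dk_def keys_uminus_pm polyring_iff)
next
  fix r x :: "'k mpoly" assume r: "r \<in> polyring N" and x: "x \<in> Dk N C k"
  have "r * x \<in> polyring N" using r x polyring_mult by (auto simp: Dk_def)
  moreover have "\<forall>e\<in>Poly_Mapping.keys (r * x). cdeg C e \<ge> k"
  proof
    fix e assume "e \<in> Poly_Mapping.keys (r * x)"
    then obtain a b where "e = a + b" "a \<in> Poly_Mapping.keys r" "b \<in> Poly_Mapping.keys x"
      using keys_mult[of r x] by blast
    then show "cdeg C e \<ge> k" using x by (auto simp: cdeg_add Dk_def)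
  qed
  ultimately show "r * x \<in> Dk N C k" by (simp add: Dk_def)
qed

lemma Dk_mult: "x \<in> Dk N C i \<Longrightarrow> y \<in> Dk N C j \<Longrightarrow> (x::'k::field mpoly) * y \<in> Dk N C (i + j)"
proof -
  assume x: "x \<in> Dk N C i" and y: "y \<in> Dk N C j"
  have "x * y \<in> polyring N" using x y polyring_mult by (auto simp: Dk_def)
  moreover have "\<forall>e\<in>Poly_Mapping.keys (x * y). cdeg C e \<ge> i + j"
  proof
    fix e assume "e \<in> Poly_Mapping.keys (x * y)"
    then obtain a b where "e = a + b" "a \<in> Poly_Mapping.keys x" "b \<in> Poly_Mapping.keys y"
      using keys_mult[of x y] by blast
    then show "cdeg C e \<ge> i + j" using x y by (auto simp: cdeg_add Dk_def intro: add_mono)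
  qed
  ultimately show ?thesis by (simp add: Dk_def)
qed

lemma Dk_0: "Dk N C 0 = polyring N"
  by (auto simp: Dk_def)

lemma expansion: "(p::'k::field mpoly) = (\<Sum>e\<in>Poly_Mapping.keys p. Poly_Mapping.single e (Poly_Mapping.lookup p e))"
proof (rule poly_mapping_eqI)
  fix k
  have "(\<Sum>e\<in>Poly_Mapping.keys p. Poly_Mapping.lookup (Poly_Mapping.single e (Poly_Mapping.lookup p e)) k)
      = (\<Sum>e\<in>Poly_Mapping.keys p. if e = k then Poly_Mapping.lookup p e else 0)"
    by (rule sum.cong) (auto simp: lookup_single when_def)
  also have "\<dots> = Poly_Mapping.lookup p k"
    by (simp add: sum.delta in_keys_iff)
  finally show "Poly_Mapping.lookup p k = Poly_Mapping.lookup (\<Sum>e\<in>Poly_Mapping.keys p. Poly_Mapping.single e (Poly_Mapping.lookup p e)) k"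
    by (simp add: lookup_sum)
qed

lemma single_split: "(Poly_Mapping.single e c :: 'k::field mpoly) = Poly_Mapping.single 0 c * Poly_Mapping.single e 1"
  by (simp add: mult_single)

lemma lookup_mult_monom: "Poly_Mapping.lookup ((p::'k::field mpoly) * Poly_Mapping.single a 1) (u + a) = Poly_Mapping.lookup p u"
proof -
  have "p * Poly_Mapping.single a 1 = (\<Sum>e\<in>Poly_Mapping.keys p. Poly_Mapping.single (e + a) (Poly_Mapping.lookup p e))"
    by (subst expansion[of p]) (simp add: sum_distrib_right mult_single)
  then have "Poly_Mapping.lookup (p * Poly_Mapping.single a 1) (u + a)
      = (\<Sum>e\<in>Poly_Mapping.keys p. if e = u then Poly_Mapping.lookup p e else 0)"
    by (simp add: lookup_sum lookup_single when_def)
  also have "\<dots> = Poly_Mapping.lookup p u" by (simp add: sum.delta in_keys_iff)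
  finally show ?thesis .
qed

section \<open>Primality of Dk N C 1\<close>

definition proj0 :: "nat set \<Rightarrow> 'k::field mpoly \<Rightarrow> 'k mpoly" where
  "proj0 C p = (\<Sum>e\<in>{e\<in>Poly_Mapping.keys p. cdeg C e = 0}. Poly_Mapping.single e (Poly_Mapping.lookup p e))"

lemma lookup_proj0: "Poly_Mapping.lookup (proj0 C p) k = (if cdeg C k = 0 then Poly_Mapping.lookup p k else 0)"
proof -
  have "Poly_Mapping.lookup (proj0 C p) k = (\<Sum>e\<in>{e\<in>Poly_Mapping.keys p. cdeg C e = 0}. if e = k then Poly_Mapping.lookup p e else 0)"
    unfolding proj0_def lookup_sum by (rule sum.cong) (auto simp: lookup_single when_def)
  also have "\<dots> = (if cdeg C k = 0 then Poly_Mapping.lookup p k else 0)"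
    by (simp add: sum.delta in_keys_iff)
  finally show ?thesis .
qed

lemma Dk1_prime:
  "is_prime_in (polyring N) (Dk N C 1 :: 'k::field mpoly set)"
  unfolding is_prime_in_def
proof (intro conjI ballI impI)
  show "is_ideal_in (polyring N) (Dk N C 1 :: 'k mpoly set)" by (rule Dk_ideal)
  have "(1::'k mpoly) \<notin> Dk N C 1" by (simp add: Dk_def cdeg_def)
  then show "Dk N C 1 \<noteq> (polyring N :: 'k mpoly set)" using polyring_one by blast
  fix x y :: "'k mpoly" assume x: "x \<in> polyring N" and y: "y \<in> polyring N" and xy: "x * y \<in> Dk N C 1"
  have keys_p0: "Poly_Mapping.keys (proj0 C p) \<subseteq> Poly_Mapping.keys p \<inter> {e. cdeg C e = 0}" for p :: "'k mpoly"
  proof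
    fix e assume "e \<in> Poly_Mapping.keys (proj0 C p)"
    then have "Poly_Mapping.lookup (proj0 C p) e \<noteq> 0" by (simp add: in_keys_iff)
    then have "cdeg C e = 0" "Poly_Mapping.lookup p e \<noteq> 0" by (simp_all add: lookup_proj0 split: if_splits)
    then show "e \<in> Poly_Mapping.keys p \<inter> {e. cdeg C e = 0}" by (simp add: in_keys_iff)
  qed
  have p0R: "proj0 C p \<in> polyring N" if "p \<in> polyring N" for p :: "'k mpoly"
    using that keys_p0[of p] by (auto simp: polyring_iff)
  have restD: "p - proj0 C p \<in> Dk N C 1" if "p \<in> polyring N" for p :: "'k mpoly"
  proof -
    have "p - proj0 C p \<in> polyring N" using that p0R ideal_diff[OF polyring_ideal] by blast
    moreover have "\<forall>e\<in>Poly_Mapping.keys (p - proj0 C p). cdeg C e \<ge> 1"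
    proof
      fix e assume "e \<in> Poly_Mapping.keys (p - proj0 C p)"
      then have "Poly_Mapping.lookup p e - Poly_Mapping.lookup (proj0 C p) e \<noteq> 0" by (simp add: in_keys_iff lookup_minus)
      then show "cdeg C e \<ge> 1" by (cases "cdeg C e = 0") (simp_all add: lookup_proj0)
    qed
    ultimately show ?thesis by (simp add: Dk_def)
  qed
  have zero_iff: "proj0 C p = 0 \<Longrightarrow> p \<in> Dk N C 1" if "p \<in> polyring N" for p :: "'k mpoly"
    using restD[OF that] by simp
  define x0 y0 where "x0 = proj0 C x" and "y0 = proj0 C y"
  have "x * y = x0 * y0 + ((x - x0) * y + x0 * (y - y0))" by (simp add: algebra_simps)
  moreover have "(x - x0) * y \<in> Dk N C 1" using ideal_multR[OF Dk_ideal y restD[OF x]] x0_def by simp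
  moreover have "x0 * (y - y0) \<in> Dk N C 1" using ideal_multL[OF Dk_ideal p0R[OF x] restD[OF y]] x0_def y0_def by simp
  ultimately have "x0 * y0 \<in> Dk N C 1" using xy ideal_diff[OF Dk_ideal] ideal_add[OF Dk_ideal]
    by (metis add_diff_cancel_right')
  moreover have "\<forall>e\<in>Poly_Mapping.keys (x0 * y0). cdeg C e = 0"
  proof
    fix e assume "e \<in> Poly_Mapping.keys (x0 * y0)"
    then obtain a b where "e = a + b" "a \<in> Poly_Mapping.keys x0" "b \<in> Poly_Mapping.keys y0"
      using keys_mult[of x0 y0] by blast
    moreover have "cdeg C a = 0" using keys_p0[of x] \<open>a \<in> Poly_Mapping.keys x0\<close> x0_def by blast
    moreover have "cdeg C b = 0" using keys_p0[of y] \<open>b \<in> Poly_Mapping.keys y0\<close> y0_def by blast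
    ultimately show "cdeg C e = 0" by (simp add: cdeg_add)
  qed
  moreover have "\<forall>e\<in>Poly_Mapping.keys (x0 * y0). cdeg C e \<ge> 1"
    using \<open>x0 * y0 \<in> Dk N C 1\<close> unfolding Dk_def by blast
  ultimately have "Poly_Mapping.keys (x0 * y0) = {}" by fastforce
  then have "x0 * y0 = 0" by simp
  then have "x0 = 0 \<or> y0 = 0" by simp
  then show "x \<in> Dk N C 1 \<or> y \<in> Dk N C 1"
  proof
    assume "x0 = 0" then show ?thesis using zero_iff[OF x] x0_def by simp
  next
    assume "y0 = 0" then show ?thesis using zero_iff[OF y] y0_def by simp
  qed
qed


lemma lookup_sqfree: "finite T \<Longrightarrow> Poly_Mapping.lookup (sqfree_exp T) i = (if i \<in> T then 1 else 0)"
  unfolding sqfree_exp_def lookup_sum by (simp add: lookup_single when_def)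

lemma keys_sqfree: "finite T \<Longrightarrow> Poly_Mapping.keys (sqfree_exp T) = T"
  by (auto simp: in_keys_iff lookup_sqfree split: if_splits)

definition gens :: "nat \<Rightarrow> 'k::field mpoly set" where
  "gens n = {monom (sqfree_exp \<tau>) | \<tau>. \<tau> \<subseteq> {0..n+1} \<and> \<not> B_face n \<tau>}"

lemma I_B_eq: "I_B n = ideal_gen (polyring (n+1)) (gens n)"
  by (simp add: I_B_def gens_def)

lemma gens_R: "gens n \<subseteq> (polyring (n+1) :: 'k::field mpoly set)"
proof
  fix g :: "'k mpoly" assume "g \<in> gens n"
  then obtain \<tau> where "g = monom (sqfree_exp \<tau>)" "\<tau> \<subseteq> {0..n+1}" by (auto simp: gens_def)
  moreover then have "finite \<tau>" using finite_subset by blast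
  ultimately show "g \<in> polyring (n+1)" by (simp add: monom_def polyring_iff keys_sqfree)
qed

lemma I_B_props: "is_ideal_in (polyring (n+1)) (I_B n :: 'k::field mpoly set)"
  "gens n \<subseteq> (I_B n :: 'k::field mpoly set)" "(I_B n :: 'k::field mpoly set) \<subseteq> polyring (n+1)"
  using ideal_inter[OF polyring_ideal gens_R] by (simp_all add: I_B_eq)

lemma cycle_edge_props: "cycle_edge n i j \<Longrightarrow> n \<ge> 3 \<Longrightarrow> 1 \<le> i \<and> i \<le> n \<and> 1 \<le> j \<and> j \<le> n \<and> i \<noteq> j"
  unfolding cycle_edge_def by auto

lemma facet_cases: "F \<in> B_facets n \<Longrightarrow> \<exists>i j. cycle_edge n i j \<and> (F = {0,i,j} \<or> F = {n+1,i,j})"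
  unfolding B_facets_def by blast

lemma facet_sub: "n \<ge> 3 \<Longrightarrow> F \<in> B_facets n \<Longrightarrow> F \<subseteq> {0..n+1}"
proof -
  assume n: "n \<ge> 3" and F: "F \<in> B_facets n"
  then obtain i j where ij: "cycle_edge n i j" "F = {0,i,j} \<or> F = {n+1,i,j}" using facet_cases[OF F] by blast
  have p: "1 \<le> i \<and> i \<le> n \<and> 1 \<le> j \<and> j \<le> n \<and> i \<noteq> j" by (rule cycle_edge_props[OF ij(1) n])
  then show ?thesis using ij(2) by auto
qed

lemma facets_finite: "n \<ge> 3 \<Longrightarrow> finite (B_facets n)"
proof -
  assume n: "n \<ge> 3"
  have "B_facets n \<subseteq> Pow {0..n+1}" using facet_sub[OF n] by blast
  then show ?thesis by (rule finite_subset) simp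
qed

lemma facet_card: "n \<ge> 3 \<Longrightarrow> F \<in> B_facets n \<Longrightarrow> card F = 3"
proof -
  assume n: "n \<ge> 3" and F: "F \<in> B_facets n"
  then obtain i j where ij: "cycle_edge n i j" "F = {0,i,j} \<or> F = {n+1,i,j}" using facet_cases[OF F] by blast
  have p: "1 \<le> i \<and> i \<le> n \<and> 1 \<le> j \<and> j \<le> n \<and> i \<noteq> j" by (rule cycle_edge_props[OF ij(1) n])
  from ij(2) show ?thesis
  proof
    assume "F = {0,i,j}" then show ?thesis using p by simp
  next
    assume "F = {n+1,i,j}" then show ?thesis using p by simp
  qed
qed

lemma facet_cycle_card: "n \<ge> 3 \<Longrightarrow> F \<in> B_facets n \<Longrightarrow> card ({1..n} - F) = n - 2"
proof -
  assume n: "n \<ge> 3" and F: "F \<in> B_facets n"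
  then obtain i j where ij: "cycle_edge n i j" "F = {0,i,j} \<or> F = {n+1,i,j}" using facet_cases[OF F] by blast
  have p: "1 \<le> i \<and> i \<le> n \<and> 1 \<le> j \<and> j \<le> n \<and> i \<noteq> j" by (rule cycle_edge_props[OF ij(1) n])
  have "{1..n} - F = {1..n} - {i,j}" using ij(2) by auto
  moreover have "card ({1..n} - {i,j}) = n - 2" using p by (subst card_Diff_subset) auto
  ultimately show ?thesis by simp
qed

lemma I_B_sub_Dk: "n \<ge> 3 \<Longrightarrow> F \<in> B_facets n \<Longrightarrow> (I_B n :: 'k::field mpoly set) \<subseteq> Dk (n+1) ({0..n+1} - F) 1"
  unfolding I_B_eq
proof (rule ideal_gen_least[OF Dk_ideal])
  assume n: "n \<ge> 3" and F: "F \<in> B_facets n"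
  show "gens n \<subseteq> (Dk (n+1) ({0..n+1} - F) 1 :: 'k mpoly set)"
  proof
    fix g :: "'k mpoly" assume "g \<in> gens n"
    then obtain \<tau> where g: "g = monom (sqfree_exp \<tau>)" "\<tau> \<subseteq> {0..n+1}" "\<not> B_face n \<tau>" by (auto simp: gens_def)
    then have fin: "finite \<tau>" using finite_subset by blast
    have "\<not> \<tau> \<subseteq> F" using g(3) F by (auto simp: B_face_def)
    then obtain c where c: "c \<in> \<tau>" "c \<notin> F" by blast
    have "cdeg ({0..n+1} - F) (sqfree_exp \<tau>) \<ge> Poly_Mapping.lookup (sqfree_exp \<tau>) c"
      unfolding cdeg_def by (rule member_le_sum) (use c g(2) in auto)
    then have "cdeg ({0..n+1} - F) (sqfree_exp \<tau>) \<ge> 1" using c fin by (simp add: lookup_sqfree)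
    then show "g \<in> Dk (n+1) ({0..n+1} - F) 1" using gens_R \<open>g \<in> gens n\<close>
      by (auto simp: Dk_def g(1) monom_def)
  qed
qed

lemma monom_in_I_B:
  assumes n: "n \<ge> 3" and e: "Poly_Mapping.keys e \<subseteq> {0..n+1}" and nf: "\<not> B_face n (Poly_Mapping.keys e)"
  shows "(Poly_Mapping.single e 1 :: 'k::field mpoly) \<in> I_B n"
proof -
  define \<tau> where "\<tau> = Poly_Mapping.keys e"
  have g: "(monom (sqfree_exp \<tau>) :: 'k mpoly) \<in> I_B n"
    using I_B_props(2) e nf unfolding gens_def \<tau>_def by blast
  have "e = (e - sqfree_exp \<tau>) + sqfree_exp \<tau>"
    by (rule poly_mapping_eqI) (auto simp: lookup_add lookup_minus lookup_sqfree \<tau>_def in_keys_iff)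
  then have "(Poly_Mapping.single e 1 :: 'k mpoly) = Poly_Mapping.single (e - sqfree_exp \<tau>) 1 * monom (sqfree_exp \<tau>)"
    by (metis monom_def mult_single mult_1)
  moreover have "Poly_Mapping.keys (e - sqfree_exp \<tau>) \<subseteq> {0..n+1}"
    using e by (auto simp: in_keys_iff lookup_minus)
  ultimately show ?thesis using ideal_multL[OF I_B_props(1) polyring_single g] by metis
qed

lemma SR_decomp:
  assumes n: "n \<ge> 3" and p: "p \<in> polyring (n+1)"
    and all: "\<And>F. F \<in> B_facets n \<Longrightarrow> p \<in> Dk (n+1) ({0..n+1} - F) 1"
  shows "(p :: 'k::field mpoly) \<in> I_B n"
proof -
  have "(\<Sum>e\<in>Poly_Mapping.keys p. Poly_Mapping.single 0 (Poly_Mapping.lookup p e) * Poly_Mapping.single e 1) \<in> I_B n"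
  proof (rule ideal_sum[OF I_B_props(1)], simp)
    fix e assume eK: "e \<in> Poly_Mapping.keys p"
    have eV: "Poly_Mapping.keys e \<subseteq> {0..n+1}" using p eK by (auto simp: polyring_iff)
    have "\<not> B_face n (Poly_Mapping.keys e)"
    proof
      assume "B_face n (Poly_Mapping.keys e)"
      then obtain F where F: "F \<in> B_facets n" "Poly_Mapping.keys e \<subseteq> F" by (auto simp: B_face_def)
      have "cdeg ({0..n+1} - F) e = 0" unfolding cdeg_def using F(2)
        by (intro sum.neutral) (auto simp: in_keys_iff)
      then show False using all[OF F(1)] eK by (force simp: Dk_def)
    qed
    then have "(Poly_Mapping.single e 1 :: 'k mpoly) \<in> I_B n" using monom_in_I_B[OF n eV] by blast
    then show "Poly_Mapping.single 0 (Poly_Mapping.lookup p e) * Poly_Mapping.single e 1 \<in> I_B n"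
      using ideal_multL[OF I_B_props(1) polyring_single[of 0 "n+1"]] by auto
  qed
  then show ?thesis by (metis (no_types, lifting) expansion single_split sum.cong)
qed


lemma Ass_facet:
  assumes n: "n \<ge> 3" and P: "P \<in> Ass (polyring (n+1)) (I_B n :: 'k::field mpoly set)"
  shows "\<exists>F\<in>B_facets n. P = Dk (n+1) ({0..n+1} - F) 1"
proof -
  let ?R = "polyring (n+1) :: 'k mpoly set"
  let ?D = "\<lambda>F. Dk (n+1) ({0..n+1} - F) 1 :: 'k mpoly set"
  obtain r where r: "r \<in> ?R" "P = {x\<in>?R. x * r \<in> I_B n}" and pr: "is_prime_in ?R P"
    using P by (auto simp: Ass_def)
  define S where "S = {F\<in>B_facets n. r \<notin> ?D F}"
  have finS: "finite S" using facets_finite[OF n] by (simp add: S_def)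
  have Peq: "P = {x\<in>?R. \<forall>F\<in>S. x \<in> ?D F}"
  proof (intro equalityI subsetI)
    fix x assume "x \<in> P"
    then have x: "x \<in> ?R" "x * r \<in> I_B n" using r by auto
    have "x \<in> ?D F" if "F \<in> S" for F
    proof -
      have "x * r \<in> ?D F" using x(2) I_B_sub_Dk[OF n] that by (auto simp: S_def)
      then show ?thesis using Dk1_prime x(1) r(1) that unfolding is_prime_in_def S_def by blast
    qed
    then show "x \<in> {x\<in>?R. \<forall>F\<in>S. x \<in> ?D F}" using x by blast
  next
    fix x assume x: "x \<in> {x\<in>?R. \<forall>F\<in>S. x \<in> ?D F}"
    have "x * r \<in> ?D F" if "F \<in> B_facets n" for F
    proof (cases "F \<in> S")
      case True then show ?thesis using x ideal_multR[OF Dk_ideal r(1)] by blast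
    next
      case False then have "r \<in> ?D F" using that by (auto simp: S_def)
      then show ?thesis using x ideal_multL[OF Dk_ideal] by blast
    qed
    then have "x * r \<in> I_B n" using SR_decomp[OF n] x r(1) polyring_mult by blast
    then show "x \<in> P" using r x by blast
  qed
  have "S \<noteq> {}"
  proof
    assume "S = {}"
    then have "P = ?R" using Peq by auto
    then show False using pr unfolding is_prime_in_def by blast
  qed
  have "\<exists>F\<in>S. ?D F \<subseteq> P"
  proof (rule ccontr)
    assume "\<not> ?thesis"
    then have "\<forall>F\<in>S. \<exists>y. y \<in> ?D F - P" by blast
    then obtain y where y: "\<And>F. F \<in> S \<Longrightarrow> y F \<in> ?D F - P" by metis
    have yR: "y F \<in> ?R - P" if "F \<in> S" for F using y[OF that] by (auto simp: Dk_def)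
    have nP: "prod y S \<in> ?R - P"
      by (rule prime_prod_notin[OF pr polyring_ideal polyring_one finS yR])
    have "prod y S \<in> ?D G" if G: "G \<in> S" for G
    proof -
      have "prod y S = y G * prod y (S - {G})" using G finS by (simp add: prod.remove)
      moreover have "prod y (S - {G}) \<in> ?R" using yR by (intro polyring_prod) (use finS in auto)
      ultimately show ?thesis using ideal_multR[OF Dk_ideal] y[OF G] by auto
    qed
    then have "prod y S \<in> P" using Peq nP by blast
    then show False using nP by blast
  qed
  then obtain F where F: "F \<in> S" "?D F \<subseteq> P" by blast
  have "P \<subseteq> ?D F" using Peq F(1) by blast
  then show ?thesis using F S_def by blast
qed

definition sF :: "nat set \<Rightarrow> nat \<Rightarrow> nat \<Rightarrow>\<^sub>0 nat" where
  "sF F k = (\<Sum>i\<in>F. Poly_Mapping.single i k)"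

lemma lookup_sF: "finite F \<Longrightarrow> Poly_Mapping.lookup (sF F k) i = (if i \<in> F then k else 0)"
  unfolding sF_def lookup_sum by (simp add: lookup_single when_def)

lemma construct:
  assumes n: "n \<ge> 3" and F: "F \<in> B_facets n"
  shows "Poly_Mapping.keys e \<subseteq> {0..n+1} \<Longrightarrow> cdeg ({0..n+1} - F) e \<ge> k \<Longrightarrow>
    (monom (e + sF F k) :: 'k::field mpoly) \<in> ideal_pow (polyring (n+1)) (I_B n) k"
proof (induction k arbitrary: e)
  have finF: "finite F" using facet_sub[OF n F] finite_subset by blast
  case 0
  have "Poly_Mapping.keys (e + sF F 0) \<subseteq> {0..n+1}"
    using 0 by (auto simp: in_keys_iff lookup_add lookup_sF[OF finF])
  then show ?case by (simp add: monom_def polyring_single)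
next
  case (Suc k)
  have finF: "finite F" using facet_sub[OF n F] finite_subset by blast
  let ?C = "{0..n+1} - F"
  obtain c where c: "c \<in> ?C" "Poly_Mapping.lookup e c \<ge> 1"
  proof (rule ccontr)
    assume "\<not> thesis"
    then have "\<forall>c\<in>?C. Poly_Mapping.lookup e c = 0" using that by force
    then have "cdeg ?C e = 0" by (simp add: cdeg_def)
    then show False using Suc.prems by simp
  qed
  define e' where "e' = e - Poly_Mapping.single c 1"
  have ee: "e = e' + Poly_Mapping.single c 1"
    by (rule poly_mapping_eqI) (use c in \<open>auto simp: e'_def lookup_add lookup_minus lookup_single when_def\<close>)
  have "cdeg ?C (Poly_Mapping.single c 1) = 1"
    using c(1) by (simp add: cdeg_def lookup_single when_def sum.delta sum.delta')
  then have "cdeg ?C e = cdeg ?C e' + 1"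
    by (simp add: ee cdeg_add)
  then have e'k: "cdeg ?C e' \<ge> k" using Suc.prems by simp
  have e'V: "Poly_Mapping.keys e' \<subseteq> {0..n+1}" using Suc.prems(1) by (auto simp: e'_def in_keys_iff lookup_minus)
  have IH: "(monom (e' + sF F k) :: 'k mpoly) \<in> ideal_pow (polyring (n+1)) (I_B n) k"
    using Suc.IH[OF e'V e'k] .
  have cF: "c \<notin> F" "c \<in> {0..n+1}" using c by auto
  have "Poly_Mapping.single c 1 + sqfree_exp F = sqfree_exp (insert c F)"
    by (rule poly_mapping_eqI) (use cF finF in \<open>auto simp: lookup_add lookup_sqfree lookup_single when_def\<close>)
  moreover have "(monom (sqfree_exp (insert c F)) :: 'k mpoly) \<in> I_B n"
  proof -
    have "\<not> B_face n (insert c F)"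
    proof
      assume "B_face n (insert c F)"
      then obtain G where G: "G \<in> B_facets n" "insert c F \<subseteq> G" by (auto simp: B_face_def)
      have "card (insert c F) = 4" using cF finF facet_card[OF n F] by simp
      moreover have "card (insert c F) \<le> card G" using G facet_sub[OF n G(1)]
        by (meson card_mono finite_atLeastAtMost finite_subset)
      ultimately show False using facet_card[OF n G(1)] by simp
    qed
    moreover have "insert c F \<subseteq> {0..n+1}" using cF facet_sub[OF n F] by auto
    ultimately show ?thesis using I_B_props(2) unfolding gens_def by blast
  qed
  ultimately have g: "(monom (Poly_Mapping.single c 1 + sqfree_exp F) :: 'k mpoly) \<in> I_B n" by simp
  have sFs: "sF F (Suc k) = sF F k + sqfree_exp F"
    unfolding sF_def sqfree_exp_def by (simp add: sum.distrib[symmetric] single_add[symmetric])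
  have "e + sF F (Suc k) = (Poly_Mapping.single c 1 + sqfree_exp F) + (e' + sF F k)"
    by (simp add: ee sFs ac_simps)
  then have "(monom (e + sF F (Suc k)) :: 'k mpoly) = monom (Poly_Mapping.single c 1 + sqfree_exp F) * monom (e' + sF F k)"
    by (simp add: monom_def mult_single)
  then show ?case using ideal_pow_mult[OF polyring_ideal I_B_props(1) g IH] by simp
qed


lemma mdeg_V: "finite V \<Longrightarrow> Poly_Mapping.keys e \<subseteq> V \<Longrightarrow> mdeg e = (\<Sum>i\<in>V. Poly_Mapping.lookup e i)"
  unfolding mdeg_def by (rule sum.mono_neutral_left) (auto simp: in_keys_iff)

theorem lemma3p9:
  fixes n m :: nat and a b :: "nat \<Rightarrow>\<^sub>0 nat"
  assumes "n \<ge> 3" and "m \<ge> 1"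
    and "Poly_Mapping.keys a \<subseteq> {0..n+1}"
    and "\<And>i. Poly_Mapping.lookup b i = (if 1 \<le> i \<and> i \<le> n then max (Poly_Mapping.lookup a i - 1) 0 else Poly_Mapping.lookup a i)"
    and "(monom a :: 'k::field mpoly) \<in> symb_pow (polyring (n+1)) (I_B n) (int m)"
  shows "(monom b :: 'k mpoly) \<in> symb_pow (polyring (n+1)) (I_B n) (int m - (int n - 2))
    \<and> int (mdeg b) \<ge> int (mdeg a) - int n
    \<and> ((\<forall>i\<in>{1..n}. Poly_Mapping.lookup a i \<noteq> 0) \<longrightarrow> int (mdeg b) = int (mdeg a) - int n)"
proof -
  note n = assms(1)
  let ?V = "{0..n+1}"
  let ?R = "polyring (n+1) :: 'k mpoly set"
  have bV: "Poly_Mapping.keys b \<subseteq> ?V" using assms(3,4) by (auto simp: in_keys_iff split: if_splits)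
  have bR: "(monom b :: 'k mpoly) \<in> ?R" using bV by (simp add: monom_def polyring_single)
  have pw: "Poly_Mapping.lookup a i = Poly_Mapping.lookup b i + (if i \<in> {1..n} \<and> Poly_Mapping.lookup a i \<noteq> 0 then 1 else 0)" for i
    using assms(4)[of i] by auto
  have pw': "Poly_Mapping.lookup a i \<le> Poly_Mapping.lookup b i + (if i \<in> {1..n} then 1 else 0)" for i
    using assms(4)[of i] by auto
  have part1: "(monom b :: 'k mpoly) \<in> symb_pow ?R (I_B n) (int m - (int n - 2))"
  proof (cases "int m - (int n - 2) \<le> 0")
    case True then show ?thesis using bR by (simp add: symb_pow_def)
  next
    case False
    define k where "k = m + 2 - n"
    have kk: "nat (int m - (int n - 2)) = k" "k + (n - 2) = m" using False n by (auto simp: k_def)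
    have H: "\<forall>P \<in> Ass ?R (I_B n). \<exists>s\<in>?R - P. s * monom b \<in> ideal_pow ?R (I_B n) k"
    proof
      fix P assume P: "P \<in> Ass ?R (I_B n)"
      show "\<exists>s\<in>?R - P. s * monom b \<in> ideal_pow ?R (I_B n) k"
    proof -
      obtain F where F: "F \<in> B_facets n" "P = Dk (n+1) (?V - F) 1" using Ass_facet[OF n P] by blast
      let ?C = "?V - F"
      have finF: "finite F" using facet_sub[OF n F(1)] finite_subset by blast
      obtain s0 where s0: "s0 \<in> ?R - P" "s0 * monom a \<in> ideal_pow ?R (I_B n) m"
        using assms(5) P assms(2) by (auto simp: symb_pow_def)
      have "ideal_pow ?R (I_B n) m \<subseteq> Dk (n+1) ?C m"
        by (rule ideal_pow_sub[where D="\<lambda>k. Dk (n+1) ?C k", OF polyring_ideal I_B_props(1) Dk_ideal Dk_0 I_B_sub_Dk[OF n F(1)]])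
           (metis Dk_mult plus_1_eq_Suc)
      then have sa: "s0 * monom a \<in> Dk (n+1) ?C m" using s0 by blast
      have "\<not> (\<forall>e\<in>Poly_Mapping.keys s0. cdeg ?C e \<ge> 1)" using s0(1) F(2) by (simp add: Dk_def)
      then obtain u where u: "u \<in> Poly_Mapping.keys s0" "cdeg ?C u = 0" by (auto simp: not_le)
      have "u + a \<in> Poly_Mapping.keys (s0 * monom a)"
        using u(1) by (simp add: in_keys_iff monom_def lookup_mult_monom)
      then have "cdeg ?C (u + a) \<ge> m" using sa by (auto simp: Dk_def)
      then have am: "cdeg ?C a \<ge> m" using u(2) by (simp add: cdeg_add)
      have "cdeg ?C a \<le> (\<Sum>i\<in>?C. Poly_Mapping.lookup b i + (if i \<in> {1..n} then 1 else 0))"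
        unfolding cdeg_def by (rule sum_mono) (rule pw')
      also have "\<dots> = cdeg ?C b + (\<Sum>i\<in>?C. if i \<in> {1..n} then 1 else 0)"
        unfolding cdeg_def by (rule sum.distrib)
      also have "(\<Sum>i\<in>?C. if i \<in> {1..n} then 1 else (0::nat)) = (\<Sum>i\<in>?C. if i \<in> {1..n} - F then 1 else (0::nat))"
        by (rule sum.cong) auto
      also have "\<dots> = card ({1..n} - F)"
        by (subst sum.inter_filter[symmetric]) (auto intro: arg_cong[where f=card])
      finally have "cdeg ?C a \<le> cdeg ?C b + (n - 2)" using facet_cycle_card[OF n F(1)] by simp
      then have bk: "cdeg ?C b \<ge> k" using am kk by linarith
      have mem: "(monom (b + sF F k) :: 'k mpoly) \<in> ideal_pow ?R (I_B n) k"
        by (rule construct[OF n F(1) bV bk])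
      define s where "s = (monom (sF F k) :: 'k mpoly)"
      have sV: "Poly_Mapping.keys (sF F k) \<subseteq> ?V"
        using facet_sub[OF n F(1)] by (auto simp: in_keys_iff lookup_sF[OF finF] split: if_splits)
      have sR: "s \<in> ?R" using sV by (simp add: s_def monom_def polyring_single)
      have "cdeg ?C (sF F k) = 0" by (auto simp: cdeg_def lookup_sF[OF finF])
      then have "s \<notin> P" using F(2) by (auto simp: s_def monom_def Dk_def)
      moreover have "s * monom b = monom (b + sF F k)" by (simp add: s_def monom_def mult_single add.commute)
      ultimately have sP: "s \<in> ?R - P" "s * monom b \<in> ideal_pow ?R (I_B n) k" using sR mem by auto
      show ?thesis by (rule bexI[of _ s]) (use sP in auto)
    qed
    qed
    show ?thesis
      by (simp only: symb_pow_def if_not_P[OF False] kk(1) mem_Collect_eq) (use bR H in blast)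
  qed
  have fa: "mdeg a = (\<Sum>i\<in>?V. Poly_Mapping.lookup a i)" by (rule mdeg_V) (use assms(3) in auto)
  have fb: "mdeg b = (\<Sum>i\<in>?V. Poly_Mapping.lookup b i)" by (rule mdeg_V) (use bV in auto)
  have dsum: "mdeg a = mdeg b + (\<Sum>i\<in>?V. if i \<in> {1..n} \<and> Poly_Mapping.lookup a i \<noteq> 0 then 1 else 0)"
  proof -
    have "(\<Sum>i\<in>?V. Poly_Mapping.lookup a i) = (\<Sum>i\<in>?V. Poly_Mapping.lookup b i + (if i \<in> {1..n} \<and> Poly_Mapping.lookup a i \<noteq> 0 then 1 else 0))"
      by (rule sum.cong[OF refl]) (rule pw)
    then show ?thesis unfolding fa fb by (simp only: sum.distrib)
  qed
  have le: "(\<Sum>i\<in>?V. if i \<in> {1..n} \<and> Poly_Mapping.lookup a i \<noteq> 0 then 1 else (0::nat)) \<le> (\<Sum>i\<in>?V. if i \<in> {1..n} then 1 else 0)"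
    by (rule sum_mono) auto
  have cn: "(\<Sum>i\<in>?V. if i \<in> {1..n} then 1 else (0::nat)) = n"
  proof -
    have "(\<Sum>i\<in>?V. if i \<in> {1..n} then 1 else (0::nat)) = (\<Sum>i\<in>{i\<in>?V. i \<in> {1..n}}. 1)"
      by (rule sum.inter_filter[symmetric]) simp
    also have "{i\<in>?V. i \<in> {1..n}} = {1..n}" by auto
    finally show ?thesis by simp
  qed
  have part2: "int (mdeg b) \<ge> int (mdeg a) - int n" using dsum le cn by linarith
  have part3: "int (mdeg b) = int (mdeg a) - int n" if all: "\<forall>i\<in>{1..n}. Poly_Mapping.lookup a i \<noteq> 0"
  proof -
    have "(\<Sum>i\<in>?V. if i \<in> {1..n} \<and> Poly_Mapping.lookup a i \<noteq> 0 then 1 else (0::nat)) = (\<Sum>i\<in>?V. if i \<in> {1..n} then 1 else 0)"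
      by (rule sum.cong) (use all in auto)
    then show ?thesis using dsum cn by linarith
  qed
  show ?thesis using part1 part2 part3 by blast
qed

end
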